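(* Under the Standing Setup and Assumption (G) described in the context, let $g$ be any Boolean function of $k$ variables of the form $$g(x_1,\ldots,x_k)=\bigoplus_{i=1}^s g_i(x_{\ell_i+1},\ldots,x_{\ell_{i+1}}),$$ where each $g_i$ is an arbitrary Boolean function of $\ell_{i+1}-\ell_i$ variables, and regard $g$ as a function on $\mathbf{F}_2^n$ depending only on the first $k$ coordinates. Then $$\mathcal{E}(PC_{f,\mathcal{T}})\ \ge\ \big[\mathcal{E}(f\oplus g)\big]^{2^s}.$$
   Context: Standing Setup. $f:\mathbf{F}_2^n\to\mathbf{F}_2$ is a Boolean function. $\mathbf{x}_1,\ldots,\mathbf{x}_n$ are binary sequences, $\mathbf{x}_j=(x_j(t))_{t\ge0}$, with $\mathbf{x}_j$ periodic of period $T_j$, i.e. $x_j(t)=x_j(t \bmod T_j)$. Let $s\ge1$ and integers $0=\ell_1<\ell_2<\cdots<\ell_{s+1}=k\le n$; variable $j$ belongs to block $i$ if $\ell_i<j\le\ell_{i+1}$. For $1\le i\le s$, $M_i=q_i\,\mathrm{lcm}(T_{\ell_i+1},\ldots,T_{\ell_{i+1}})$ with $q_i$ a positive integer. For $c=\sum_{i=1}^s c_i2^{i-1}\in\{0,\ldots,2^s-1\}$ with $c_i\in\{0,1\}$, put $\tau_c=\sum_{i=1}^s c_iM_i$, and $\mathcal{T}=\{\tau_c\}$. The parity-check sequence is $PC_{f,\mathcal{T}}(t)=\bigoplus_{c=0}^{2^s-1} f\big(x_1(t+\tau_c),\ldots,x_n(t+\tau_c)\big)$. The bias of a Boolean function $h$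 of $m$ variables is $\mathcal{E}(h)=2^{-m}\sum_{x\in\mathbf{F}_2^m}(-1)^{h(x)}$. The bias $\mathcal{E}(PC_{f,\mathcal{T}})$ is the bias of $PC_{f,\mathcal{T}}(t)$ (for a fixed $t\ge0$) viewed as a Boolean function of the $T_1+\cdots+T_n$ bits $x_j(0),\ldots,x_j(T_j-1)$, $1\le j\le n$; equivalently $\mathcal{E}(PC_{f,\mathcal{T}})=\mathbb{E}[(-1)^{PC_{f,\mathcal{T}}(t)}]$ when these bits are independent and uniformly distributed. Assumption (G): (i) for every $j$ with $k<j\le n$, the $2^s$ integers $\tau_c$ are pairwise incongruent modulo $T_j$ (in particular no nonzero element of $\mathcal{T}$ is a multiple of $T_j$); (ii) for every $i\in\{1,\ldots,s\}$ and every $j$ in block $i$, the $2^{s-1}$ integers $\sum_{l\ne i}c_lM_l$ ($c_l\in\{0,1\}$) are pairwise incongruent modulo $T_j$. *)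

theory Defs
  imports Complex_Main
begin

text \<open>Vectors of F_2^m are functions nat => bool supported on {1..m} (coordinate j = x j).\<close>
definition bvecs :: "nat \<Rightarrow> (nat \<Rightarrow> bool) set" where
  "bvecs m = {x. \<forall>j. x j \<longrightarrow> j \<in> {1..m}}"

definition bias :: "nat \<Rightarrow> ((nat \<Rightarrow> bool) \<Rightarrow> bool) \<Rightarrow> real" where
  "bias m h = (\<Sum>x\<in>bvecs m. (if h x then -1 else 1)) / 2 ^ m"

definition cdig :: "nat \<Rightarrow> nat \<Rightarrow> bool" where
  "cdig c i = bit c (i - 1)"

definition Mblk :: "(nat \<Rightarrow> nat) \<Rightarrow> (nat \<Rightarrow> nat) \<Rightarrow> (nat \<Rightarrow> nat) \<Rightarrow> nat \<Rightarrow> nat" where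
  "Mblk q l T i = q i * Lcm (T ` {l i <.. l (Suc i)})"

definition tau :: "nat \<Rightarrow> (nat \<Rightarrow> nat) \<Rightarrow> (nat \<Rightarrow> nat) \<Rightarrow> (nat \<Rightarrow> nat) \<Rightarrow> nat \<Rightarrow> nat" where
  "tau s q l T c = (\<Sum>i=1..s. if cdig c i then Mblk q l T i else 0)"

text \<open>The bits x_j(0..T_j-1), j=1..n, collected in X j t (zero outside the relevant range).\<close>
definition bitassign :: "nat \<Rightarrow> (nat \<Rightarrow> nat) \<Rightarrow> (nat \<Rightarrow> nat \<Rightarrow> bool) set" where
  "bitassign n T = {X. \<forall>j t. X j t \<longrightarrow> (j \<in> {1..n} \<and> t < T j)}"

text \<open>The periodic sequence x_j(t) = x_j(t mod T_j), evaluated on the vector (x_1(t),...,x_n(t)).\<close>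
definition seqvec :: "(nat \<Rightarrow> nat) \<Rightarrow> (nat \<Rightarrow> nat \<Rightarrow> bool) \<Rightarrow> nat \<Rightarrow> (nat \<Rightarrow> bool)" where
  "seqvec T X t = (\<lambda>j. X j (t mod T j))"

definition PC :: "((nat \<Rightarrow> bool) \<Rightarrow> bool) \<Rightarrow> nat \<Rightarrow> (nat \<Rightarrow> nat) \<Rightarrow> (nat \<Rightarrow> nat) \<Rightarrow> (nat \<Rightarrow> nat)
     \<Rightarrow> (nat \<Rightarrow> nat \<Rightarrow> bool) \<Rightarrow> nat \<Rightarrow> bool" where
  "PC f s q l T X t = odd (card {c \<in> {0..<2^s}. f (seqvec T X (t + tau s q l T c))})"

definition biasPC :: "((nat \<Rightarrow> bool) \<Rightarrow> bool) \<Rightarrow> nat \<Rightarrow> nat \<Rightarrow> (nat \<Rightarrow> nat) \<Rightarrow> (nat \<Rightarrow> nat)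
     \<Rightarrow> (nat \<Rightarrow> nat) \<Rightarrow> nat \<Rightarrow> real" where
  "biasPC f n s q l T t =
     (\<Sum>X\<in>bitassign n T. (if PC f s q l T X t then -1 else 1)) / 2 ^ (\<Sum>j=1..n. T j)"

definition blockpart :: "(nat \<Rightarrow> nat) \<Rightarrow> nat \<Rightarrow> (nat \<Rightarrow> bool) \<Rightarrow> (nat \<Rightarrow> bool)" where
  "blockpart l i x = (\<lambda>j. x j \<and> l i < j \<and> j \<le> l (Suc i))"

definition blocksum :: "nat \<Rightarrow> (nat \<Rightarrow> nat) \<Rightarrow> (nat \<Rightarrow> (nat \<Rightarrow> bool) \<Rightarrow> bool) \<Rightarrow> (nat \<Rightarrow> bool) \<Rightarrow> bool" where
  "blocksum s l G x = odd (card {i \<in> {1..s}. G i (blockpart l i x)})"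

end

theory Submission
  imports Defs "HOL-Analysis.Convex"
begin

definition sg :: "bool \<Rightarrow> real" where "sg b = (if b then -1 else 1)"

lemma sg_sq: "sg b * sg b = 1" by (simp add: sg_def)
lemma sg_neq: "sg (a \<noteq> b) = sg a * sg b" by (simp add: sg_def)

lemma sg_odd_card: "finite C \<Longrightarrow> sg (odd (card {c\<in>C. P c})) = (\<Prod>c\<in>C. sg (P c))"
proof (induction C rule: finite_induct)
  case empty then show ?case by (simp add: sg_def)
next
  case (insert x F)
  have e: "{c\<in>insert x F. P c} = (if P x then insert x {c\<in>F. P c} else {c\<in>F. P c})" by auto
  have f: "finite {c\<in>F. P c}" using insert by auto
  show ?case
  proof (cases "P x")
    case True
    then have "card {c\<in>insert x F. P c} = Suc (card {c\<in>F. P c})" using e f insert(2) by simp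
    then show ?thesis using insert True by (auto simp: sg_def split: if_splits)
  next
    case False
    then show ?thesis using insert e by (simp add: sg_def)
  qed
qed

lemma prod_sg_pm: "finite C \<Longrightarrow> (\<Prod>c\<in>C. sg (P c)) = 1 \<or> (\<Prod>c\<in>C. sg (P c)) = -1"
  by (induction C rule: finite_induct) (auto simp: sg_def)

lemma tau_split:
  assumes "1 \<le> i" "i \<le> S"
  shows "tau S q l T c = tau S q l T (unset_bit (i-1) c) + (if cdig c i then Mblk q l T i else 0)"
proof -
  have "tau S q l T c = (\<Sum>i'\<in>{1..S}-{i}. if cdig c i' then Mblk q l T i' else 0) + (if cdig c i then Mblk q l T i else 0)"
    unfolding tau_def using assms by (simp add: sum.remove add.commute)
  moreover have "tau S q l T (unset_bit (i-1) c) = (\<Sum>i'\<in>{1..S}-{i}. if cdig c i' then Mblk q l T i' else 0)"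
  proof -
    have "tau S q l T (unset_bit (i-1) c) = (\<Sum>i'\<in>{1..S}-{i}. if cdig (unset_bit (i-1) c) i' then Mblk q l T i' else 0) + 0"
      unfolding tau_def using assms by (simp add: sum.remove add.commute cdig_def bit_unset_bit_iff)
    also have "\<dots> = (\<Sum>i'\<in>{1..S}-{i}. if cdig c i' then Mblk q l T i' else 0)"
    proof (intro trans[OF add_0_right] sum.cong refl)
      fix i' assume "i' \<in> {1..S}-{i}"
      then have "i - 1 \<noteq> i' - 1" using assms by auto
      then show "(if cdig (unset_bit (i-1) c) i' then Mblk q l T i' else 0) = (if cdig c i' then Mblk q l T i' else 0)"
        by (simp add: cdig_def bit_unset_bit_iff)
    qed
    finally show ?thesis .
  qed
  ultimately show ?thesis by simp
qed

lemma tau_set_bit: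
  assumes "1 \<le> i" "i \<le> S" "\<not> cdig c i"
  shows "tau S q l T (set_bit (i-1) c) = tau S q l T c + Mblk q l T i"
proof -
  have u: "unset_bit (i-1) (set_bit (i-1) c) = c"
    using assms by (intro bit_eqI) (auto simp: bit_simps cdig_def)
  show ?thesis using tau_split[OF assms(1,2), of q l T "set_bit (i-1) c"] u
    by (simp add: cdig_def bit_simps)
qed

lemma tau_unset_mod:
  assumes "1 \<le> i" "i \<le> S" "l i < j" "j \<le> l (Suc i)"
  shows "tau S q l T (unset_bit (i-1) c) mod T j = tau S q l T c mod T j"
proof -
  have "T j dvd Mblk q l T i" unfolding Mblk_def using assms by (auto intro: dvd_Lcm)
  then show ?thesis using tau_split[OF assms(1,2), of q l T c] by auto
qed

lemma less_pow_nobit: "(c::nat) < 2^s \<Longrightarrow> s \<le> m \<Longrightarrow> \<not> bit c m"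
  by (metis bit_take_bit_iff not_le take_bit_nat_eq_self_iff)

lemma set_bit_less: "(c::nat) < 2^s \<Longrightarrow> m < s \<Longrightarrow> set_bit m c < 2^s"
proof -
  assume a: "c < 2^s" "m < s"
  have "take_bit s c = c" using a(1) by (simp add: take_bit_nat_eq_self_iff)
  then have "take_bit s (set_bit m c) = set_bit m c" using a by (simp add: take_bit_set_bit_eq)
  then show ?thesis by (metis take_bit_nat_less_exp)
qed

lemma unset_bit_less: "(c::nat) < 2^s \<Longrightarrow> unset_bit m c < 2^s"
proof -
  assume a: "c < 2^s"
  have "take_bit s c = c" using a by (simp add: take_bit_nat_eq_self_iff)
  moreover have "s \<le> m \<Longrightarrow> unset_bit m c = c"
    using less_pow_nobit[OF a] by (intro bit_eqI) (auto simp: bit_unset_bit_iff)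
  ultimately have "take_bit s (unset_bit m c) = unset_bit m c" by (simp add: take_bit_unset_bit_eq)
  then show ?thesis by (metis take_bit_nat_less_exp)
qed

lemma tau_Suc_low: "c < 2^s \<Longrightarrow> tau (Suc s) q l T c = tau s q l T c"
  unfolding tau_def by (simp add: cdig_def less_pow_nobit)

lemma tau_Suc_high: "c < 2^s \<Longrightarrow> tau (Suc s) q l T (c + 2^s) = tau s q l T c + Mblk q l T (Suc s)"
proof -
  assume c: "c < 2^s"
  have "set_bit s c = c + 2^s" using c by (simp add: set_bit_eq less_pow_nobit)
  then show ?thesis
    using tau_set_bit[of "Suc s" "Suc s" c q l T] tau_Suc_low[OF c, of q l T] c
    by (simp add: cdig_def less_pow_nobit)
qed


definition merge :: "(nat \<times> nat) set \<Rightarrow> (nat \<Rightarrow> nat \<Rightarrow> bool) \<Rightarrow> (nat \<Rightarrow> nat \<Rightarrow> bool) \<Rightarrow> (nat \<Rightarrow> nat \<Rightarrow> bool)" where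
  "merge S X Y = (\<lambda>j r. if (j, r) \<in> S then X j r else Y j r)"

lemma merge_in: "X \<in> bitassign n T \<Longrightarrow> Y \<in> bitassign n T \<Longrightarrow> merge S X Y \<in> bitassign n T"
  unfolding bitassign_def merge_def by auto

lemma merge_merge1: "merge S (merge S X Z) W = merge S X W"
  unfolding merge_def by auto

lemma merge_swap_inv: "merge S (merge S X Z) (merge S Z X) = X"
  unfolding merge_def by auto

lemma bitassign_eq: "bitassign n T = (\<lambda>P j r. (j, r) \<in> P) ` Pow (SIGMA j:{1..n}. {..<T j})"
proof (rule set_eqI, rule iffI)
  fix X assume "X \<in> bitassign n T"
  then have "X = (\<lambda>j r. (j, r) \<in> {(j,r). X j r})" and "{(j,r). X j r} \<in> Pow (SIGMA j:{1..n}. {..<T j})"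
    unfolding bitassign_def by auto
  then show "X \<in> (\<lambda>P j r. (j, r) \<in> P) ` Pow (SIGMA j:{1..n}. {..<T j})" by blast
qed (auto simp: bitassign_def)

lemma finite_bitassign: "finite (bitassign n T)"
  unfolding bitassign_eq by (intro finite_imageI finite_Pow_iff[THEN iffD2] finite_SigmaI) auto

lemma card_bitassign: "card (bitassign n T) = 2 ^ (\<Sum>j=1..n. T j)"
proof -
  have "inj_on (\<lambda>P j r. (j, r) \<in> P) (Pow (SIGMA j:{1..n}. {..<T j}))"
  proof (rule inj_onI)
    fix P Q assume "(\<lambda>j r. (j, r) \<in> P) = (\<lambda>j r. (j, r) \<in> Q)"
    then have "\<And>j r. (j, r) \<in> P \<longleftrightarrow> (j, r) \<in> Q" by metis
    then show "P = Q" by auto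
  qed
  then have "card (bitassign n T) = card (Pow (SIGMA j:{1..n}. {..<T j}))"
    unfolding bitassign_eq by (rule card_image)
  also have "\<dots> = 2 ^ card (SIGMA j:{1..n}. {..<T j})"
    by (rule card_Pow, intro finite_SigmaI) auto
  also have "card (SIGMA j:{1..n}. {..<T j}) = (\<Sum>j=1..n. T j)" by (simp add: card_SigmaI finite_SigmaI)
  finally show ?thesis .
qed

lemma zero_in_bitassign: "(\<lambda>j r. False) \<in> bitassign n T"
  unfolding bitassign_def by auto

lemma card_bitassign_pos: "card (bitassign n T) > 0"
  using finite_bitassign zero_in_bitassign card_gt_0_iff by blast

lemma sum_merge_swap:
  fixes H :: "_ \<Rightarrow> _ \<Rightarrow> real"
  shows "(\<Sum>X\<in>bitassign n T. \<Sum>Z\<in>bitassign n T. H (merge S X Z) (merge S Z X))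
       = (\<Sum>X\<in>bitassign n T. \<Sum>Z\<in>bitassign n T. H X Z)"
proof -
  let ?O = "bitassign n T"
  let ?i = "\<lambda>(X, Z). (merge S X Z, merge S Z X)"
  have bij: "bij_betw ?i (?O \<times> ?O) (?O \<times> ?O)"
  proof (rule bij_betw_byWitness[where f' = ?i])
    show "\<forall>a\<in>?O \<times> ?O. ?i (?i a) = a" by (auto simp: merge_swap_inv)
    show "\<forall>a\<in>?O \<times> ?O. ?i (?i a) = a" by (auto simp: merge_swap_inv)
    show "?i ` (?O \<times> ?O) \<subseteq> ?O \<times> ?O" by (auto simp: merge_in)
    show "?i ` (?O \<times> ?O) \<subseteq> ?O \<times> ?O" by (auto simp: merge_in)
  qed
  have "(\<Sum>X\<in>?O. \<Sum>Z\<in>?O. H (merge S X Z) (merge S Z X)) = (\<Sum>p\<in>?O \<times> ?O. (case_prod H) (?i p))"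
    by (simp add: sum.cartesian_product case_prod_beta)
  also have "\<dots> = (\<Sum>p\<in>?O \<times> ?O. case_prod H p)"
    by (rule sum.reindex_bij_betw[OF bij])
  also have "\<dots> = (\<Sum>X\<in>?O. \<Sum>Z\<in>?O. H X Z)"
    by (simp add: sum.cartesian_product)
  finally show ?thesis .
qed

lemma sum_merge:
  fixes G :: "_ \<Rightarrow> real"
  shows "(\<Sum>X\<in>bitassign n T. \<Sum>Z\<in>bitassign n T. G (merge S X Z))
       = card (bitassign n T) * (\<Sum>X\<in>bitassign n T. G X)"
proof -
  have "(\<Sum>X\<in>bitassign n T. \<Sum>Z\<in>bitassign n T. G (merge S X Z)) = (\<Sum>X\<in>bitassign n T. \<Sum>Z\<in>bitassign n T. G X)"
    using sum_merge_swap[of "\<lambda>X Z. G X" S n T] by simp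
  also have "\<dots> = card (bitassign n T) * (\<Sum>X\<in>bitassign n T. G X)"
    by (simp add: sum_distrib_left)
  finally show ?thesis .
qed


lemma core:
  fixes A B :: "(nat \<Rightarrow> nat \<Rightarrow> bool) \<Rightarrow> real" and n :: nat and T :: "nat \<Rightarrow> nat"
  defines "Om \<equiv> bitassign n T"
  assumes A_dep: "\<And>X Y. X \<in> Om \<Longrightarrow> Y \<in> Om \<Longrightarrow> (\<And>j r. (j, r) \<in> D \<Longrightarrow> X j r = Y j r) \<Longrightarrow> A X = A Y"
    and B_D: "\<And>X W. X \<in> Om \<Longrightarrow> W \<in> Om \<Longrightarrow> B (merge D X W) = B (merge S X W)"
    and hAB: "\<And>X. X \<in> Om \<Longrightarrow> (\<Sum>Z\<in>Om. A (merge S X Z)) = (\<Sum>Z\<in>Om. B (merge S X Z))"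
  shows "(\<Sum>X\<in>Om. A X)^2 \<le> card Om * (\<Sum>X\<in>Om. A X * B X)"
proof -
  define N where "N = real (card Om)"
  have Npos: "N > 0" unfolding N_def Om_def using card_bitassign_pos by simp
  define h where "h X = (\<Sum>Z\<in>Om. A (merge S X Z))" for X
  have hB: "h X = (\<Sum>Z\<in>Om. B (merge S X Z))" if "X \<in> Om" for X
    using hAB[OF that] unfolding h_def .
  have a: "(\<Sum>X\<in>Om. h X) = N * (\<Sum>X\<in>Om. A X)"
    unfolding h_def N_def Om_def by (rule sum_merge)
  have hm: "h (merge S X Z) = h X" for X Z unfolding h_def by (simp add: merge_merge1)
  have b1: "(\<Sum>X\<in>Om. h X * h X) = N * (\<Sum>X\<in>Om. A X * h X)"
  proof -
    have "(\<Sum>X\<in>Om. h X * h X) = (\<Sum>X\<in>Om. \<Sum>Z\<in>Om. A (merge S X Z) * h X)"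
      by (simp add: h_def sum_distrib_right)
    also have "\<dots> = (\<Sum>X\<in>Om. \<Sum>Z\<in>Om. (\<lambda>Y. A Y * h Y) (merge S X Z))"
      by (simp add: hm)
    also have "\<dots> = N * (\<Sum>X\<in>Om. A X * h X)"
      unfolding N_def Om_def by (rule sum_merge)
    finally show ?thesis .
  qed
  have b2: "(\<Sum>X\<in>Om. A X * h X) = N * (\<Sum>X\<in>Om. A X * B X)"
  proof -
    have "(\<Sum>X\<in>Om. A X * h X) = (\<Sum>X\<in>Om. \<Sum>W\<in>Om. A X * B (merge S X W))"
      by (intro sum.cong refl) (simp add: hB sum_distrib_left)
    also have "\<dots> = (\<Sum>X\<in>Om. \<Sum>W\<in>Om. (\<lambda>Y. A Y * B Y) (merge D X W))"
    proof (intro sum.cong refl)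
      fix X W assume X: "X \<in> Om" and W: "W \<in> Om"
      have "A (merge D X W) = A X"
        by (rule A_dep) (use X W merge_in[of X n T W D] in \<open>auto simp: merge_def Om_def\<close>)
      then show "A X * B (merge S X W) = (\<lambda>Y. A Y * B Y) (merge D X W)"
        using B_D[OF X W] by simp
    qed
    also have "\<dots> = N * (\<Sum>X\<in>Om. A X * B X)"
      unfolding N_def Om_def by (rule sum_merge)
    finally show ?thesis .
  qed
  have cs: "(\<Sum>X\<in>Om. h X)^2 \<le> (\<Sum>X\<in>Om. (h X)^2) * N"
    unfolding N_def by (rule sum_squared_le_sum_of_squares)
  have "N^2 * (\<Sum>X\<in>Om. A X)^2 \<le> N^2 * (N * (\<Sum>X\<in>Om. A X * B X))"
    using cs a b1 b2 by (simp add: power2_eq_square algebra_simps)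
  then have "(\<Sum>X\<in>Om. A X)^2 \<le> N * (\<Sum>X\<in>Om. A X * B X)"
    using Npos by (simp add: mult_le_cancel_left)
  then show ?thesis unfolding N_def .
qed


lemma mod_add_rcancel_nat: "((x::nat) + a) mod m = (y + a) mod m \<longleftrightarrow> x mod m = y mod m"
  by (simp add: nat_mod_eq_iff)

lemma mod_add_lcancel_nat: "((a::nat) + x) mod m = (a + y) mod m \<longleftrightarrow> x mod m = y mod m"
  by (simp add: nat_mod_eq_iff)

lemma block_exists:
  fixes l :: "nat \<Rightarrow> nat"
  assumes "l 1 = 0" "\<And>i. 1 \<le> i \<Longrightarrow> i \<le> m \<Longrightarrow> l i < l (Suc i)" "1 \<le> j" "j \<le> l (Suc m)"
  shows "\<exists>i. 1 \<le> i \<and> i \<le> m \<and> l i < j \<and> j \<le> l (Suc i)"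
  using assms
proof (induction m)
  case 0 then have "j \<le> 0" by (simp add: One_nat_def)
  then show ?case using 0 by simp
next
  case (Suc m)
  show ?case
  proof (cases "j \<le> l (Suc m)")
    case True
    then obtain i where "1 \<le> i \<and> i \<le> m \<and> l i < j \<and> j \<le> l (Suc i)"
      using Suc by auto
    then show ?thesis by (intro exI[of _ i]) auto
  next
    case False
    then show ?thesis using Suc.prems by (intro exI[of _ "Suc m"]) auto
  qed
qed

definition Aprod :: "((nat \<Rightarrow> bool) \<Rightarrow> bool) \<Rightarrow> nat \<Rightarrow> (nat \<Rightarrow> nat) \<Rightarrow> (nat \<Rightarrow> nat) \<Rightarrow> (nat \<Rightarrow> nat)
     \<Rightarrow> nat \<Rightarrow> (nat \<Rightarrow> nat \<Rightarrow> bool) \<Rightarrow> real" where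
  "Aprod f s q l T t X = (\<Prod>c\<in>{0..<2^s}. sg (f (seqvec T X (t + tau s q l T c))))"

lemma biasPC_eq: "biasPC f n s q l T t = (\<Sum>X\<in>bitassign n T. Aprod f s q l T t X) / 2 ^ (\<Sum>j=1..n. T j)"
proof -
  have "(if PC f s q l T X t then -1 else 1) = Aprod f s q l T t X" for X
  proof -
    have "(if PC f s q l T X t then -1 else 1) = sg (PC f s q l T X t)" by (simp add: sg_def)
    also have "\<dots> = Aprod f s q l T t X"
      unfolding PC_def Aprod_def by (rule sg_odd_card) simp
    finally show ?thesis .
  qed
  then show ?thesis unfolding biasPC_def by simp
qed

definition rot :: "(nat \<Rightarrow> nat) \<Rightarrow> nat \<Rightarrow> (nat \<Rightarrow> nat \<Rightarrow> bool) \<Rightarrow> (nat \<Rightarrow> nat \<Rightarrow> bool)" where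
  "rot T M X = (\<lambda>j r. if r < T j then X j ((r + M) mod T j) else False)"

lemma rot_in: "X \<in> bitassign n T \<Longrightarrow> rot T M X \<in> bitassign n T"
  unfolding bitassign_def rot_def by auto

lemma rot_inj: "inj_on (rot T M) (bitassign n T)"
proof (rule inj_onI)
  fix X Y assume X: "X \<in> bitassign n T" and Y: "Y \<in> bitassign n T" and e: "rot T M X = rot T M Y"
  show "X = Y"
  proof (intro ext)
    fix j r
    show "X j r = Y j r"
    proof (cases "r < T j")
      case False then show ?thesis using X Y unfolding bitassign_def by auto
    next
      case True
      let ?g = "\<lambda>r. (r + M) mod T j"
      have "inj_on ?g {..<T j}"
        by (rule inj_onI) (simp add: mod_add_rcancel_nat)
      moreover have "?g ` {..<T j} \<subseteq> {..<T j}" using True by auto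
      ultimately have "?g ` {..<T j} = {..<T j}" by (intro endo_inj_surj) auto
      then have "r \<in> ?g ` {..<T j}" using True by simp
      then obtain r0 where r0: "r0 < T j" "?g r0 = r" by auto
      have "rot T M X j r0 = rot T M Y j r0" using e by simp
      then show ?thesis using r0 by (simp add: rot_def)
    qed
  qed
qed

lemma rot_bij: "bij_betw (rot T M) (bitassign n T) (bitassign n T)"
proof (rule bij_betw_imageI[OF rot_inj])
  have "rot T M ` bitassign n T \<subseteq> bitassign n T" using rot_in by blast
  then show "rot T M ` bitassign n T = bitassign n T"
    by (rule endo_inj_surj[OF finite_bitassign _ rot_inj])
qed

lemma seqvec_rot:
  assumes "X \<in> bitassign n T" "\<And>j. 1 \<le> j \<Longrightarrow> j \<le> n \<Longrightarrow> T j > 0"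
  shows "seqvec T (rot T M X) u = seqvec T X (u + M)"
proof
  fix j
  show "seqvec T (rot T M X) u j = seqvec T X (u + M) j"
  proof (cases "1 \<le> j \<and> j \<le> n")
    case True
    then have "T j > 0" using assms(2) by auto
    then show ?thesis by (simp add: seqvec_def rot_def mod_add_left_eq)
  next
    case False
    then show ?thesis using assms(1) by (auto simp: seqvec_def rot_def bitassign_def)
  qed
qed


lemma step:
  fixes f :: "(nat \<Rightarrow> bool) \<Rightarrow> bool" and l T q :: "nat \<Rightarrow> nat"
  assumes l_first: "l 1 = 0"
    and l_mono: "\<And>i. 1 \<le> i \<Longrightarrow> i \<le> Suc s \<Longrightarrow> l i < l (Suc i)"
    and k_le: "l (Suc (Suc s)) \<le> n"
    and T_pos: "\<And>j. 1 \<le> j \<Longrightarrow> j \<le> n \<Longrightarrow> T j > 0"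
    and G1: "\<And>j. l (Suc (Suc s)) < j \<Longrightarrow> j \<le> n \<Longrightarrow>
               inj_on (\<lambda>c. tau (Suc s) q l T c mod T j) {0..<2^Suc s}"
    and G2: "\<And>i j. 1 \<le> i \<Longrightarrow> i \<le> Suc s \<Longrightarrow> l i < j \<Longrightarrow> j \<le> l (Suc i) \<Longrightarrow>
               inj_on (\<lambda>c. tau (Suc s) q l T c mod T j) {c \<in> {0..<2^Suc s}. \<not> cdig c i}"
  shows "(biasPC f n s q l T t)^2 \<le> biasPC f n (Suc s) q l T t"
proof -
  define M where "M = Mblk q l T (Suc s)"
  define Om where "Om = bitassign n T"
  define A where "A = Aprod f s q l T t"
  define B where "B X = A (rot T M X)" for X
  define D where "D = {(j, (t + tau s q l T c) mod T j) | j c. 1 \<le> j \<and> j \<le> n \<and> c < 2^s}"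
  define S :: "(nat \<times> nat) set" where "S = {(j, r). l (Suc s) < j \<and> j \<le> l (Suc (Suc s))}"
  have dvdM: "T j dvd M" if "l (Suc s) < j" "j \<le> l (Suc (Suc s))" for j
    unfolding M_def Mblk_def using that by (auto intro: dvd_Lcm)
  have F2: "l (Suc s) < j \<and> j \<le> l (Suc (Suc s))"
    if j: "1 \<le> j" "j \<le> n" and c: "c < 2^s" "c2 < 2^s"
      and e: "(t + tau s q l T c2) mod T j = (t + tau s q l T c + M) mod T j" for j c c2
  proof (rule ccontr)
    assume nb: "\<not> (l (Suc s) < j \<and> j \<le> l (Suc (Suc s)))"
    define a where "a = c2"
    define b where "b = c + 2^s"
    have ta: "tau (Suc s) q l T a = tau s q l T c2" unfolding a_def by (rule tau_Suc_low[OF c(2)])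
    have tb: "tau (Suc s) q l T b = tau s q l T c + M" unfolding b_def M_def by (rule tau_Suc_high[OF c(1)])
    have emod: "tau (Suc s) q l T a mod T j = tau (Suc s) q l T b mod T j"
      using e unfolding ta tb by (simp add: add.assoc mod_add_lcancel_nat)
    have ab: "a \<noteq> b" unfolding a_def b_def using c by simp
    have aS: "a < 2^Suc s" "b < 2^Suc s" unfolding a_def b_def using c by auto
    show False
    proof (cases "l (Suc (Suc s)) < j")
      case True
      then have "a = b" using G1[OF True j(2)] emod aS by (auto dest: inj_onD)
      then show False using ab by simp
    next
      case False
      then obtain i where i: "1 \<le> i" "i \<le> Suc s" "l i < j" "j \<le> l (Suc i)"
        using block_exists[of l "Suc s" j] l_first l_mono j by auto
      have "i \<noteq> Suc s" using nb i by auto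
      then have i_s: "i \<le> s" using i by simp
      define a' where "a' = unset_bit (i-1) a"
      define b' where "b' = unset_bit (i-1) b"
      have "tau (Suc s) q l T a' mod T j = tau (Suc s) q l T b' mod T j"
        unfolding a'_def b'_def using tau_unset_mod[OF i] emod by simp
      moreover have "a' \<in> {c \<in> {0..<2^Suc s}. \<not> cdig c i}" "b' \<in> {c \<in> {0..<2^Suc s}. \<not> cdig c i}"
        unfolding a'_def b'_def using aS unset_bit_less[of a "Suc s" "i-1"] unset_bit_less[of b "Suc s" "i-1"] by (auto simp: cdig_def bit_unset_bit_iff)
      ultimately have "a' = b'" using G2[OF i] by (auto dest: inj_onD)
      moreover have "\<not> bit a' s" unfolding a'_def a_def using less_pow_nobit[OF c(2)]
        by (simp add: bit_unset_bit_iff)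
      moreover have "bit b' s"
      proof -
        have "b = set_bit s c" unfolding b_def using less_pow_nobit[OF c(1)] by (simp add: set_bit_eq)
        then have "bit b s" by (simp add: bit_set_bit_iff)
        then show ?thesis unfolding b'_def using i_s i by (simp add: bit_unset_bit_iff)
      qed
      ultimately show False by simp
    qed
  qed
  have Dlt: "r < T j" "1 \<le> j" "j \<le> n" if "(j, r) \<in> D" for j r
    using that T_pos unfolding D_def by auto
  have A_dep: "A X = A Y" if X: "X \<in> Om" and Y: "Y \<in> Om" and ag: "\<And>j r. (j, r) \<in> D \<Longrightarrow> X j r = Y j r" for X Y
  proof -
    have "seqvec T X (t + tau s q l T c) = seqvec T Y (t + tau s q l T c)" if "c < 2^s" for c
    proof
      fix j show "seqvec T X (t + tau s q l T c) j = seqvec T Y (t + tau s q l T c) j"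
      proof (cases "1 \<le> j \<and> j \<le> n")
        case True then show ?thesis using ag[of j "(t + tau s q l T c) mod T j"] that
          unfolding seqvec_def D_def by auto
      next
        case False then show ?thesis using X Y unfolding seqvec_def Om_def bitassign_def by auto
      qed
    qed
    then show ?thesis unfolding A_def Aprod_def by (intro prod.cong refl) auto
  qed
  have core_ineq: "(\<Sum>X\<in>Om. A X)^2 \<le> card Om * (\<Sum>X\<in>Om. A X * B X)"
    unfolding Om_def
  proof (rule core[where D = D and S = S])
    fix X Y assume "X \<in> bitassign n T" "Y \<in> bitassign n T" "\<And>j r. (j, r) \<in> D \<Longrightarrow> X j r = Y j r"
    then show "A X = A Y" using A_dep unfolding Om_def by blast
  next
    fix X W assume X: "X \<in> bitassign n T" and W: "W \<in> bitassign n T"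
    show "B (merge D X W) = B (merge S X W)"
      unfolding B_def
    proof (rule A_dep)
      show "rot T M (merge D X W) \<in> Om" "rot T M (merge S X W) \<in> Om"
        unfolding Om_def using X W by (auto intro: rot_in merge_in)
      fix j r assume jr: "(j, r) \<in> D"
      then obtain c where c: "c < 2^s" "r = (t + tau s q l T c) mod T j" and j: "1 \<le> j" "j \<le> n"
        unfolding D_def by auto
      have rl: "r < T j" using Dlt[OF jr] by simp
      define r' where "r' = (r + M) mod T j"
      have r': "r' = (t + tau s q l T c + M) mod T j" unfolding r'_def c(2) by (simp add: mod_add_left_eq)
      have iff: "(j, r') \<in> D \<longleftrightarrow> (j, r') \<in> S"
      proof
        assume "(j, r') \<in> D"
        then obtain c2 where "c2 < 2^s" "r' = (t + tau s q l T c2) mod T j" unfolding D_def by auto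
        then show "(j, r') \<in> S" using F2[OF j c(1), of c2] r' unfolding S_def by auto
      next
        assume "(j, r') \<in> S"
        then have "T j dvd M" using dvdM unfolding S_def by auto
        then have "r' = r" unfolding r'_def using rl by auto
        then show "(j, r') \<in> D" using jr by simp
      qed
      show "rot T M (merge D X W) j r = rot T M (merge S X W) j r"
        using iff rl unfolding rot_def merge_def r'_def by simp
    qed
  next
    fix X assume X: "X \<in> bitassign n T"
    have rm: "rot T M (merge S X Z) = merge S X (rot T M Z)" if Z: "Z \<in> bitassign n T" for Z
    proof (intro ext)
      fix j r
      show "rot T M (merge S X Z) j r = merge S X (rot T M Z) j r"
      proof (cases "(j, r) \<in> S")
        case True
        then have d: "T j dvd M" using dvdM unfolding S_def by auto
        show ?thesis
        proof (cases "r < T j")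
          case True
          then have "(r + M) mod T j = r" using d by auto
          then show ?thesis using True \<open>(j, r) \<in> S\<close> unfolding rot_def merge_def S_def by auto
        next
          case False
          then show ?thesis using \<open>(j, r) \<in> S\<close> X unfolding rot_def merge_def S_def bitassign_def by auto
        qed
      next
        case False
        then show ?thesis unfolding rot_def merge_def S_def by auto
      qed
    qed
    have "(\<Sum>Z\<in>bitassign n T. B (merge S X Z)) = (\<Sum>Z\<in>bitassign n T. A (merge S X (rot T M Z)))"
      unfolding B_def using rm by simp
    also have "\<dots> = (\<Sum>Z\<in>bitassign n T. A (merge S X Z))"
      using sum.reindex_bij_betw[OF rot_bij, of "\<lambda>Z. A (merge S X Z)" T M n] by simp
    finally show "(\<Sum>Z\<in>bitassign n T. A (merge S X Z)) = (\<Sum>Z\<in>bitassign n T. B (merge S X Z))" by simp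
  qed
  have AS: "Aprod f (Suc s) q l T t X = A X * B X" if X: "X \<in> Om" for X
  proof -
    let ?h = "\<lambda>c. sg (f (seqvec T X (t + tau (Suc s) q l T c)))"
    have "Aprod f (Suc s) q l T t X = prod ?h {0..<2^s + 2^s}"
      unfolding Aprod_def by (simp add: mult_2)
    also have "\<dots> = prod ?h {0..<2^s} * prod ?h {2^s..<2^s + 2^s}"
      by (rule prod.atLeastLessThan_concat[symmetric]) auto
    also have "prod ?h {2^s..<2^s + 2^s} = prod (\<lambda>c. ?h (c + 2^s)) {0..<2^s}"
      using prod.shift_bounds_nat_ivl[of ?h 0 "2^s" "2^s"] by simp
    also have "\<dots> = B X"
      unfolding B_def A_def Aprod_def
    proof (intro prod.cong refl)
      fix c assume "c \<in> {0..<(2::nat)^s}"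
      then have c: "c < 2^s" by simp
      show "?h (c + 2^s) = sg (f (seqvec T (rot T M X) (t + tau s q l T c)))"
        using tau_Suc_high[OF c, of q l T] seqvec_rot[of X n T M "t + tau s q l T c"] X T_pos
        unfolding M_def Om_def by (simp add: add.assoc)
    qed
    also have "prod ?h {0..<2^s} = A X"
      unfolding A_def Aprod_def by (intro prod.cong refl) (simp add: tau_Suc_low)
    finally show ?thesis by simp
  qed
  define N where "N = real (card Om)"
  have N: "N = 2 ^ (\<Sum>j=1..n. T j)" unfolding N_def Om_def by (simp add: card_bitassign)
  have Npos: "N > 0" unfolding N_def Om_def using card_bitassign_pos by simp
  have b1: "biasPC f n s q l T t = (\<Sum>X\<in>Om. A X) / N"
    unfolding biasPC_eq N A_def Om_def ..
  have b2: "biasPC f n (Suc s) q l T t = (\<Sum>X\<in>Om. A X * B X) / N"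
    unfolding biasPC_eq N Om_def[symmetric] using AS by simp
  have "((\<Sum>X\<in>Om. A X) / N)^2 = (\<Sum>X\<in>Om. A X)^2 / N^2" by (simp add: power_divide)
  also have "\<dots> \<le> (N * (\<Sum>X\<in>Om. A X * B X)) / N^2"
    using core_ineq unfolding N_def by (intro divide_right_mono) auto
  also have "\<dots> = (\<Sum>X\<in>Om. A X * B X) / N" using Npos by (simp add: power2_eq_square)
  finally show ?thesis unfolding b1 b2 .
qed


lemma bvecs_eq: "bvecs n = (\<lambda>P j. j \<in> P) ` Pow {1..n}"
proof (rule set_eqI, rule iffI)
  fix x assume "x \<in> bvecs n"
  then have "x = (\<lambda>j. j \<in> {j. x j})" and "{j. x j} \<in> Pow {1..n}" unfolding bvecs_def by auto
  then show "x \<in> (\<lambda>P j. j \<in> P) ` Pow {1..n}" by blast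
qed (auto simp: bvecs_def)

lemma card_bvecs: "card (bvecs n) = 2 ^ n"
proof -
  have "inj_on (\<lambda>P j. j \<in> P) (Pow {1..n})"
  proof (rule inj_onI)
    fix P Q :: "nat set" assume "(\<lambda>j. j \<in> P) = (\<lambda>j. j \<in> Q)"
    then show "P = Q" by (metis Collect_mem_eq)
  qed
  then have "card (bvecs n) = card (Pow {1..n})" unfolding bvecs_eq by (rule card_image)
  then show ?thesis by (simp add: card_Pow)
qed

lemma finite_bvecs: "finite (bvecs n)" unfolding bvecs_eq by simp

lemma base:
  assumes T_pos: "\<And>j. 1 \<le> j \<Longrightarrow> j \<le> n \<Longrightarrow> T j > 0"
  shows "biasPC f n 0 q l T t = bias n f"
proof -
  define Om where "Om = bitassign n T"
  define Om0 where "Om0 = {Y \<in> Om. \<forall>j. \<not> Y j (t mod T j)}"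
  define \<beta> where "\<beta> p = (\<lambda>j r. if r = t mod T j then fst p j else snd p j r)" for p :: "(nat \<Rightarrow> bool) \<times> (nat \<Rightarrow> nat \<Rightarrow> bool)"
  define \<gamma> where "\<gamma> X = (seqvec T X t, \<lambda>j r. if r = t mod T j then False else X j r)" for X
  have bij: "bij_betw \<beta> (bvecs n \<times> Om0) Om"
  proof (rule bij_betw_byWitness[where f' = \<gamma>])
    show "\<forall>a\<in>bvecs n \<times> Om0. \<gamma> (\<beta> a) = a"
    proof
      fix a assume "a \<in> bvecs n \<times> Om0"
      then show "\<gamma> (\<beta> a) = a" unfolding \<gamma>_def \<beta>_def seqvec_def Om0_def
        by (cases a) (auto intro!: ext)
    qed
    show "\<forall>a'\<in>Om. \<beta> (\<gamma> a') = a'"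
      unfolding \<gamma>_def \<beta>_def seqvec_def by (auto intro!: ext)
    show "\<beta> ` (bvecs n \<times> Om0) \<subseteq> Om"
    proof
      fix X assume "X \<in> \<beta> ` (bvecs n \<times> Om0)"
      then obtain x Y where x: "x \<in> bvecs n" and Y: "Y \<in> Om0" and X: "X = \<beta> (x, Y)" by auto
      have "j \<in> {1..n} \<and> r < T j" if "X j r" for j r
      proof (cases "r = t mod T j")
        case True
        then have "x j" using that X unfolding \<beta>_def by simp
        then have "j \<in> {1..n}" using x unfolding bvecs_def by auto
        then show ?thesis using True T_pos by auto
      next
        case False
        then have "Y j r" using that X unfolding \<beta>_def by simp
        then show ?thesis using Y unfolding Om0_def Om_def bitassign_def by auto
      qed
      then show "X \<in> Om" unfolding Om_def bitassign_def by auto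
    qed
    show "\<gamma> ` Om \<subseteq> bvecs n \<times> Om0"
      unfolding \<gamma>_def Om0_def Om_def bitassign_def bvecs_def seqvec_def by auto
  qed
  have fin0: "finite Om0" unfolding Om0_def Om_def using finite_bitassign by simp
  have card0: "card Om0 > 0"
  proof -
    have "(\<lambda>j r. False) \<in> Om0" unfolding Om0_def Om_def using zero_in_bitassign by simp
    then show ?thesis using fin0 card_gt_0_iff by blast
  qed
  have cardO: "card Om = 2 ^ n * card Om0"
    using bij_betw_same_card[OF bij] by (simp add: card_cartesian_product card_bvecs)
  have sumeq: "(\<Sum>X\<in>Om. sg (f (seqvec T X t))) = card Om0 * (\<Sum>x\<in>bvecs n. sg (f x))"
  proof -
    have "(\<Sum>X\<in>Om. sg (f (seqvec T X t))) = (\<Sum>p\<in>bvecs n \<times> Om0. sg (f (seqvec T (\<beta> p) t)))"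
      using sum.reindex_bij_betw[OF bij, of "\<lambda>X. sg (f (seqvec T X t))"] by simp
    also have "\<dots> = (\<Sum>p\<in>bvecs n \<times> Om0. sg (f (fst p)))"
      by (intro sum.cong refl) (auto simp: \<beta>_def seqvec_def)
    also have "\<dots> = (\<Sum>(x, Y)\<in>bvecs n \<times> Om0. sg (f x))"
      by (simp add: case_prod_beta)
    also have "\<dots> = (\<Sum>x\<in>bvecs n. \<Sum>Y\<in>Om0. sg (f x))"
      by (rule sum.cartesian_product[symmetric])
    also have "\<dots> = card Om0 * (\<Sum>x\<in>bvecs n. sg (f x))"
      by (simp add: sum_distrib_left)
    finally show ?thesis .
  qed
  have A0: "Aprod f 0 q l T t X = sg (f (seqvec T X t))" for X
    unfolding Aprod_def tau_def by simp
  have "biasPC f n 0 q l T t = (\<Sum>X\<in>Om. sg (f (seqvec T X t))) / card Om"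
    unfolding biasPC_eq A0 Om_def by (simp add: card_bitassign)
  also have "\<dots> = (\<Sum>x\<in>bvecs n. sg (f x)) / 2 ^ n"
    unfolding sumeq cardO using card0 by simp
  also have "\<dots> = bias n f" unfolding bias_def sg_def ..
  finally show ?thesis .
qed


lemma main:
  fixes f :: "(nat \<Rightarrow> bool) \<Rightarrow> bool" and l T q :: "nat \<Rightarrow> nat"
  assumes "l 1 = 0"
    and "\<And>i. 1 \<le> i \<Longrightarrow> i \<le> s \<Longrightarrow> l i < l (Suc i)"
    and "l (Suc s) \<le> n"
    and T_pos: "\<And>j. 1 \<le> j \<Longrightarrow> j \<le> n \<Longrightarrow> T j > 0"
    and "\<And>j. l (Suc s) < j \<Longrightarrow> j \<le> n \<Longrightarrow>
               inj_on (\<lambda>c. tau s q l T c mod T j) {0..<2^s}"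
    and "\<And>i j. 1 \<le> i \<Longrightarrow> i \<le> s \<Longrightarrow> l i < j \<Longrightarrow> j \<le> l (Suc i) \<Longrightarrow>
               inj_on (\<lambda>c. tau s q l T c mod T j) {c \<in> {0..<2^s}. \<not> cdig c i}"
  shows "biasPC f n s q l T t \<ge> (bias n f) ^ (2 ^ s) \<and> (s = 0 \<longrightarrow> biasPC f n s q l T t = bias n f)"
  using assms
proof (induction s)
  case 0
  then show ?case using base[OF T_pos] by simp
next
  case (Suc s)
  have l_first: "l 1 = 0" using Suc.prems by simp
  have l_mono: "\<And>i. 1 \<le> i \<Longrightarrow> i \<le> Suc s \<Longrightarrow> l i < l (Suc i)" using Suc.prems by simp
  have k_le: "l (Suc (Suc s)) \<le> n" using Suc.prems by simp
  have G1: "\<And>j. l (Suc (Suc s)) < j \<Longrightarrow> j \<le> n \<Longrightarrow>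
               inj_on (\<lambda>c. tau (Suc s) q l T c mod T j) {0..<2^Suc s}" using Suc.prems by simp
  have G2: "\<And>i j. 1 \<le> i \<Longrightarrow> i \<le> Suc s \<Longrightarrow> l i < j \<Longrightarrow> j \<le> l (Suc i) \<Longrightarrow>
               inj_on (\<lambda>c. tau (Suc s) q l T c mod T j) {c \<in> {0..<2^Suc s}. \<not> cdig c i}"
    using Suc.prems by simp
  have cong: "inj_on (\<lambda>c. tau (Suc s) q l T c mod T j) C \<Longrightarrow> C \<subseteq> {0..<2^s} \<Longrightarrow>
      inj_on (\<lambda>c. tau s q l T c mod T j) C" for C j
    by (subst inj_on_cong[where g = "\<lambda>c. tau (Suc s) q l T c mod T j"]) (auto simp: tau_Suc_low)
  have lt: "l (Suc s) < l (Suc (Suc s))" using l_mono[of "Suc s"] by simp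
  have IH: "biasPC f n s q l T t \<ge> (bias n f) ^ (2 ^ s) \<and> (s = 0 \<longrightarrow> biasPC f n s q l T t = bias n f)"
  proof (rule Suc.IH)
    show "l 1 = 0" by fact
    show "\<And>i. 1 \<le> i \<Longrightarrow> i \<le> s \<Longrightarrow> l i < l (Suc i)" using l_mono by simp
    show "l (Suc s) \<le> n" using lt k_le by simp
    show "\<And>j. 1 \<le> j \<Longrightarrow> j \<le> n \<Longrightarrow> T j > 0" by fact
    show "inj_on (\<lambda>c. tau s q l T c mod T j) {0..<2^s}" if j: "l (Suc s) < j" "j \<le> n" for j
    proof (cases "l (Suc (Suc s)) < j")
      case True
      then show ?thesis using G1[OF True j(2)] by (intro cong) (auto elim: inj_on_subset)
    next
      case False
      have sub: "{0..<2^s} \<subseteq> {c \<in> {0..<2^Suc s}. \<not> cdig c (Suc s)}"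
        by (auto simp: cdig_def less_pow_nobit)
      show ?thesis using G2[of "Suc s" j] j False sub
        by (intro cong) (auto elim: inj_on_subset)
    qed
    show "inj_on (\<lambda>c. tau s q l T c mod T j) {c \<in> {0..<2^s}. \<not> cdig c i}"
      if "1 \<le> i" "i \<le> s" "l i < j" "j \<le> l (Suc i)" for i j
    proof -
      have "{c \<in> {0..<2^s}. \<not> cdig c i} \<subseteq> {c \<in> {0..<2^Suc s}. \<not> cdig c i}" by auto
      then show ?thesis using G2[of i j] that
        by (intro cong) (auto elim: inj_on_subset)
    qed
  qed
  have st: "(biasPC f n s q l T t)^2 \<le> biasPC f n (Suc s) q l T t"
    by (rule step[OF l_first l_mono k_le T_pos G1 G2])
  have "(bias n f) ^ (2 ^ Suc s) \<le> (biasPC f n s q l T t)^2"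
  proof (cases "s = 0")
    case True
    then show ?thesis using IH by simp
  next
    case False
    then have "even ((2::nat) ^ s)" by simp
    then have nn: "0 \<le> (bias n f) ^ (2 ^ s)" by (simp add: zero_le_even_power)
    have "(bias n f) ^ (2 ^ Suc s) = ((bias n f) ^ (2 ^ s))^2"
      by (simp add: power_mult[symmetric] mult.commute)
    also have "\<dots> \<le> (biasPC f n s q l T t)^2"
      using IH nn by (intro power_mono) auto
    finally show ?thesis .
  qed
  then show ?case using st by simp
qed


lemma blockpart_shift:
  assumes "1 \<le> i" "i \<le> s"
  shows "blockpart l i (seqvec T X (u + Mblk q l T i)) = blockpart l i (seqvec T X u)"
proof
  fix j
  show "blockpart l i (seqvec T X (u + Mblk q l T i)) j = blockpart l i (seqvec T X u) j"
  proof (cases "l i < j \<and> j \<le> l (Suc i)")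
    case True
    then have "T j dvd Mblk q l T i" unfolding Mblk_def by (auto intro: dvd_Lcm)
    then have "(u + Mblk q l T i) mod T j = u mod T j" by auto
    then show ?thesis unfolding blockpart_def seqvec_def by simp
  next
    case False
    then show ?thesis unfolding blockpart_def by auto
  qed
qed

lemma prod_block_one:
  assumes i: "1 \<le> i" "i \<le> s"
  shows "(\<Prod>c\<in>{0..<2^s}. sg (G i (blockpart l i (seqvec T X (t + tau s q l T c))))) = 1"
proof -
  define h where "h c = sg (G i (blockpart l i (seqvec T X (t + tau s q l T c))))" for c
  define C0 where "C0 = {c \<in> {0..<(2::nat)^s}. \<not> cdig c i}"
  define sb where "sb c = set_bit (i-1) c" for c :: nat
  have dec: "{0..<2^s} = C0 \<union> sb ` C0"
  proof (rule set_eqI, rule iffI)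
    fix c assume c: "c \<in> {0..<(2::nat)^s}"
    show "c \<in> C0 \<union> sb ` C0"
    proof (cases "cdig c i")
      case False then show ?thesis using c unfolding C0_def by auto
    next
      case True
      have "c = sb (unset_bit (i-1) c)" unfolding sb_def using True
        by (intro bit_eqI) (auto simp: bit_simps cdig_def)
      moreover have "unset_bit (i-1) c \<in> C0" unfolding C0_def using c unset_bit_less[of c s "i-1"]
        by (auto simp: cdig_def bit_unset_bit_iff)
      ultimately show ?thesis by blast
    qed
  next
    fix c assume "c \<in> C0 \<union> sb ` C0"
    then show "c \<in> {0..<2^s}" unfolding C0_def sb_def using set_bit_less[of _ s "i-1"] i by auto
  qed
  have disj: "C0 \<inter> sb ` C0 = {}" unfolding C0_def sb_def cdig_def by (auto simp: bit_set_bit_iff)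
  have inj: "inj_on sb C0"
  proof (rule inj_onI)
    fix a b assume a: "a \<in> C0" and b: "b \<in> C0" and e: "sb a = sb b"
    have "unset_bit (i-1) (sb a) = a" using a unfolding sb_def C0_def cdig_def
      by (intro bit_eqI) (auto simp: bit_simps)
    moreover have "unset_bit (i-1) (sb b) = b" using b unfolding sb_def C0_def cdig_def
      by (intro bit_eqI) (auto simp: bit_simps)
    ultimately show "a = b" using e by simp
  qed
  have hsb: "h (sb c) = h c" if "c \<in> C0" for c
  proof -
    have "tau s q l T (sb c) = tau s q l T c + Mblk q l T i"
      unfolding sb_def using that i by (intro tau_set_bit) (auto simp: C0_def)
    then show ?thesis unfolding h_def using blockpart_shift[OF i, of l T X "t + tau s q l T c" q]
      by (simp add: add.assoc)
  qed
  have fin: "finite C0" unfolding C0_def by simp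
  have "(\<Prod>c\<in>{0..<2^s}. h c) = (\<Prod>c\<in>C0. h c) * (\<Prod>c\<in>sb ` C0. h c)"
    unfolding dec by (rule prod.union_disjoint) (use fin disj in auto)
  also have "(\<Prod>c\<in>sb ` C0. h c) = (\<Prod>c\<in>C0. h (sb c))" by (simp add: prod.reindex[OF inj])
  also have "\<dots> = (\<Prod>c\<in>C0. h c)" using hsb by (intro prod.cong refl) auto
  also have "(\<Prod>c\<in>C0. h c) * (\<Prod>c\<in>C0. h c) = 1"
    using prod_sg_pm[OF fin, of "\<lambda>c. G i (blockpart l i (seqvec T X (t + tau s q l T c)))"]
    unfolding h_def by auto
  finally show ?thesis unfolding h_def .
qed

lemma Aprod_blocksum:
  "Aprod (\<lambda>x. f x \<noteq> blocksum s l G x) s q l T t X = Aprod f s q l T t X"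
proof -
  let ?v = "\<lambda>c. seqvec T X (t + tau s q l T c)"
  have e1: "sg (f x \<noteq> blocksum s l G x) = sg (f x) * (\<Prod>i\<in>{1..s}. sg (G i (blockpart l i x)))" for x
  proof -
    have "sg (blocksum s l G x) = (\<Prod>i\<in>{1..s}. sg (G i (blockpart l i x)))"
      unfolding blocksum_def by (rule sg_odd_card) simp
    then show ?thesis unfolding sg_neq by simp
  qed
  have "Aprod (\<lambda>x. f x \<noteq> blocksum s l G x) s q l T t X
      = (\<Prod>c\<in>{0..<2^s}. sg (f (?v c)) * (\<Prod>i\<in>{1..s}. sg (G i (blockpart l i (?v c)))))"
    unfolding Aprod_def e1 ..
  also have "\<dots> = Aprod f s q l T t X * (\<Prod>c\<in>{0..<2^s}. \<Prod>i\<in>{1..s}. sg (G i (blockpart l i (?v c))))"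
    unfolding Aprod_def by (rule prod.distrib)
  also have "(\<Prod>c\<in>{0..<2^s}. \<Prod>i\<in>{1..s}. sg (G i (blockpart l i (?v c))))
      = (\<Prod>i\<in>{1..s}. \<Prod>c\<in>{0..<2^s}. sg (G i (blockpart l i (?v c))))"
    by (rule prod.swap)
  also have "\<dots> = 1" by (intro prod.neutral ballI prod_block_one) auto
  finally show ?thesis by simp
qed

theorem theorem1:
  fixes f :: "(nat \<Rightarrow> bool) \<Rightarrow> bool"
    and G :: "nat \<Rightarrow> (nat \<Rightarrow> bool) \<Rightarrow> bool"
    and n k s t :: nat
    and l T q :: "nat \<Rightarrow> nat"
  assumes s_pos: "s \<ge> 1"
    and l_first: "l 1 = 0"
    and l_mono: "\<And>i. 1 \<le> i \<Longrightarrow> i \<le> s \<Longrightarrow> l i < l (Suc i)"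
    and l_last: "l (Suc s) = k"
    and k_le: "k \<le> n"
    and T_pos: "\<And>j. 1 \<le> j \<Longrightarrow> j \<le> n \<Longrightarrow> T j > 0"
    and q_pos: "\<And>i. 1 \<le> i \<Longrightarrow> i \<le> s \<Longrightarrow> q i > 0"
    and G1: "\<And>j. k < j \<Longrightarrow> j \<le> n \<Longrightarrow>
               inj_on (\<lambda>c. tau s q l T c mod T j) {0..<2^s}"
    and G2: "\<And>i j. 1 \<le> i \<Longrightarrow> i \<le> s \<Longrightarrow> l i < j \<Longrightarrow> j \<le> l (Suc i) \<Longrightarrow>
               inj_on (\<lambda>c. tau s q l T c mod T j) {c \<in> {0..<2^s}. \<not> cdig c i}"
  shows "biasPC f n s q l T t \<ge> (bias n (\<lambda>x. f x \<noteq> blocksum s l G x)) ^ (2 ^ s)"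
proof -
  let ?f = "\<lambda>x. f x \<noteq> blocksum s l G x"
  have "biasPC ?f n s q l T t = biasPC f n s q l T t"
  proof -
    have "Aprod ?f s q l T t = Aprod f s q l T t" by (rule ext) (rule Aprod_blocksum)
    then show ?thesis unfolding biasPC_eq by simp
  qed
  moreover have "biasPC ?f n s q l T t \<ge> (bias n ?f) ^ (2 ^ s)"
    using main[where f = ?f and s = s and l = l and n = n and T = T and q = q and t = t] l_first l_mono k_le T_pos G1 G2 l_last by auto
  ultimately show ?thesis by simp
qed

end
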